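(* Let $I=(T,((U_1,S_1),\dots,(U_k,S_k)))$ be an instance of \textsc{Generalized Graphic Inverse Voronoi in Trees} with $S_i\subseteq W_i$ for all $i$, let $xy\in E_1$ with $x\in W_1$ and $y\in U_1\setminus W_1$, and let $0<\varepsilon<\mathrm{res}(I)$. Let $I'$ be the instance obtained from $I$ by expanding the edge $xy$ from $E_1$ by $\varepsilon$. Suppose the answer to $I$ is ``yes''. If $\Sigma'$ is a solution to $I'$, then $\Sigma'$ is also a solution to $I$.
   Context: \textsc{Generalized Graphic Inverse Voronoi in Trees}: input is a tree $T$ with positive edge-lengths $\lambda$ and pairs $(U_1,S_1),\dots,(U_k,S_k)$ of subsets of $V(T)$ with $U_1,\dots,U_k$ covering $V(T)$. A solution is $s_1,\dots,s_k\in V(T)$ with $s_i\in S_i$ and $U_i=\mathrm{cell}_T(s_i,\{s_1,\dots,s_k\})$ for all $i$, where $\mathrm{cell}_T(s,\Sigma)=\{x\in V(T)\mid d_T(s,x)\le d_T(s',x)\ \forall s'\in\Sigma\}$ and $d_T$ is the shortest-path distance. For $i\in[k]$, $W_i=U_i\setminus\bigcup_{j\neq i}U_j$ and $E_i=\{uv\in E(T)\mid u\in W_i,\ v\in U_i\setminus W_i\}$. The resolution is $\mathrm{res}(I)=\min\bigl(\mathbb{R}_{>0}\cap\{d_T(s_i,u)-d_T(s_j,u)\mid u\in U_i\cap U_j,\ s_i\in S_i,\ s_j\in S_j,\ i,j\in[k]\}\bigr)$, with $\min\emptyset=+\infty$. Expansion of $xy\in E_1$ by $\varepsilon$: $T'$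 is obtained from $T$ by subdividing $xy$ with a new vertex $y'$, with $\lambda'(xy')=\lambda(xy)$, $\lambda'(yy')=\varepsilon$, other edges unchanged; $U_1'$ is the set of vertices of $U_1$ in the component of $T-y$ containing $x$, together with $y'$; $I'=(T',((U_1',S_1),(U_2,S_2),\dots,(U_k,S_k)))$. *)

theory Defs
  imports Main "HOL-Library.Extended_Real"
begin

definition walk :: "'a set set \<Rightarrow> 'a list \<Rightarrow> bool" where
  "walk E xs \<longleftrightarrow> xs \<noteq> [] \<and> (\<forall>i. Suc i < length xs \<longrightarrow> {xs ! i, xs ! Suc i} \<in> E)"

definition walk_len :: "('a set \<Rightarrow> real) \<Rightarrow> 'a list \<Rightarrow> real" where
  "walk_len lam xs = (\<Sum>i<length xs - 1. lam {xs ! i, xs ! Suc i})"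

definition is_cycle :: "'a set set \<Rightarrow> 'a list \<Rightarrow> bool" where
  "is_cycle E xs \<longleftrightarrow> walk E xs \<and> distinct xs \<and> length xs \<ge> 3 \<and> {last xs, hd xs} \<in> E"

definition is_tree :: "'a set \<Rightarrow> 'a set set \<Rightarrow> bool" where
  "is_tree V E \<longleftrightarrow> finite V \<and> V \<noteq> {} \<and>
     (\<forall>e\<in>E. \<exists>u v. e = {u, v} \<and> u \<noteq> v \<and> u \<in> V \<and> v \<in> V) \<and>
     (\<forall>u\<in>V. \<forall>v\<in>V. \<exists>xs. walk E xs \<and> hd xs = u \<and> last xs = v) \<and>
     (\<nexists>xs. is_cycle E xs)"

definition dist_T :: "'a set set \<Rightarrow> ('a set \<Rightarrow> real) \<Rightarrow> 'a \<Rightarrow> 'a \<Rightarrow> real" where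
  "dist_T E lam u v = Inf {walk_len lam xs | xs. walk E xs \<and> hd xs = u \<and> last xs = v}"

definition cell :: "'a set \<Rightarrow> 'a set set \<Rightarrow> ('a set \<Rightarrow> real) \<Rightarrow> 'a \<Rightarrow> 'a set \<Rightarrow> 'a set" where
  "cell V E lam s \<Sigma> = {x \<in> V. \<forall>s'\<in>\<Sigma>. dist_T E lam s x \<le> dist_T E lam s' x}"

definition gv_instance :: "'a set \<Rightarrow> 'a set set \<Rightarrow> ('a set \<Rightarrow> real) \<Rightarrow> nat \<Rightarrow>
    (nat \<Rightarrow> 'a set) \<Rightarrow> (nat \<Rightarrow> 'a set) \<Rightarrow> bool" where
  "gv_instance V E lam k U S \<longleftrightarrow> is_tree V E \<and> (\<forall>e\<in>E. lam e > 0) \<and>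
     (\<forall>i\<in>{1..k}. U i \<subseteq> V \<and> S i \<subseteq> V) \<and> (\<Union>i\<in>{1..k}. U i) = V"

definition is_solution :: "'a set \<Rightarrow> 'a set set \<Rightarrow> ('a set \<Rightarrow> real) \<Rightarrow> nat \<Rightarrow>
    (nat \<Rightarrow> 'a set) \<Rightarrow> (nat \<Rightarrow> 'a set) \<Rightarrow> (nat \<Rightarrow> 'a) \<Rightarrow> bool" where
  "is_solution V E lam k U S s \<longleftrightarrow>
     (\<forall>i\<in>{1..k}. s i \<in> S i \<and> U i = cell V E lam (s i) (s ` {1..k}))"

definition W_set :: "nat \<Rightarrow> (nat \<Rightarrow> 'a set) \<Rightarrow> nat \<Rightarrow> 'a set" where
  "W_set k U i = U i - (\<Union>j\<in>{1..k} - {i}. U j)"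

definition E_set :: "'a set set \<Rightarrow> nat \<Rightarrow> (nat \<Rightarrow> 'a set) \<Rightarrow> nat \<Rightarrow> 'a set set" where
  "E_set E k U i = {{u, v} | u v. {u, v} \<in> E \<and> u \<in> W_set k U i \<and> v \<in> U i - W_set k U i}"

definition res :: "'a set set \<Rightarrow> ('a set \<Rightarrow> real) \<Rightarrow> nat \<Rightarrow>
    (nat \<Rightarrow> 'a set) \<Rightarrow> (nat \<Rightarrow> 'a set) \<Rightarrow> ereal" where
  "res E lam k U S =
    (let D = {r. r > 0 \<and> (\<exists>i\<in>{1..k}. \<exists>j\<in>{1..k}. \<exists>u\<in>U i \<inter> U j. \<exists>si\<in>S i. \<exists>sj\<in>S j.
                   r = dist_T E lam si u - dist_T E lam sj u)}
     in if D = {} then \<infinity> else ereal (Min D))"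

definition comp_without :: "'a set set \<Rightarrow> 'a \<Rightarrow> 'a \<Rightarrow> 'a set" where
  "comp_without E y x = {v. \<exists>xs. walk E xs \<and> hd xs = x \<and> last xs = v \<and> y \<notin> set xs}"

definition exp_V :: "'a set \<Rightarrow> 'a \<Rightarrow> 'a set" where
  "exp_V V y' = insert y' V"

definition exp_E :: "'a set set \<Rightarrow> 'a \<Rightarrow> 'a \<Rightarrow> 'a \<Rightarrow> 'a set set" where
  "exp_E E x y y' = (E - {{x, y}}) \<union> {{x, y'}, {y, y'}}"

definition exp_lam :: "('a set \<Rightarrow> real) \<Rightarrow> 'a \<Rightarrow> 'a \<Rightarrow> 'a \<Rightarrow> real \<Rightarrow> 'a set \<Rightarrow> real" where
  "exp_lam lam x y y' eps e =
     (if e = {x, y'} then lam {x, y} else if e = {y, y'} then eps else lam e)"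

definition exp_U :: "'a set \<Rightarrow> 'a set set \<Rightarrow> (nat \<Rightarrow> 'a set) \<Rightarrow> 'a \<Rightarrow> 'a \<Rightarrow> 'a \<Rightarrow> nat \<Rightarrow> 'a set" where
  "exp_U V E U x y y' =
     U(1 := insert y' (U 1 \<inter> comp_without E y x \<inter> V))"

end

theory Submission
  imports Defs
begin


lemma walk_single[simp]: "walk E [a]"
  by (simp add: walk_def)

lemma walk_nonempty: "walk E xs \<Longrightarrow> xs \<noteq> []"
  by (simp add: walk_def)

lemma walk_Cons2: "walk E (a # b # xs) \<longleftrightarrow> {a,b} \<in> E \<and> walk E (b # xs)"
proof
  assume h: "walk E (a # b # xs)"
  have "Suc 0 < length (a # b # xs)" by simp
  then have "{(a # b # xs) ! 0, (a # b # xs) ! Suc 0} \<in> E" using h unfolding walk_def by blast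
  then have "{a,b} \<in> E" by simp
  moreover have "walk E (b # xs)" unfolding walk_def
  proof (intro conjI allI impI)
    fix i assume "Suc i < length (b # xs)"
    then have "Suc (Suc i) < length (a # b # xs)" by simp
    then have "{(a # b # xs) ! Suc i, (a # b # xs) ! Suc (Suc i)} \<in> E" using h unfolding walk_def by blast
    then show "{(b # xs) ! i, (b # xs) ! Suc i} \<in> E" by simp
  qed simp
  ultimately show "{a,b} \<in> E \<and> walk E (b # xs)" by blast
next
  assume h: "{a,b} \<in> E \<and> walk E (b # xs)"
  show "walk E (a # b # xs)" unfolding walk_def
  proof (intro conjI allI impI)
    fix i assume i: "Suc i < length (a # b # xs)"
    show "{(a # b # xs) ! i, (a # b # xs) ! Suc i} \<in> E"
    proof (cases i)
      case 0 then show ?thesis using h by simp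
    next
      case (Suc j)
      then have "Suc j < length (b # xs)" using i by simp
      then have "{(b # xs) ! j, (b # xs) ! Suc j} \<in> E" using h unfolding walk_def by blast
      then show ?thesis using Suc by simp
    qed
  qed simp
qed

lemma walk_len_single[simp]: "walk_len lam [a] = 0"
  by (simp add: walk_len_def)

lemma walk_len_Cons2: "walk_len lam (a # b # xs) = lam {a,b} + walk_len lam (b # xs)"
proof -
  have "length (a # b # xs) - 1 = Suc (length (b # xs) - 1)" by simp
  then show ?thesis unfolding walk_len_def
    by (simp only: sum.lessThan_Suc_shift) simp
qed

lemma walk_append:
  assumes "u \<noteq> []" "v \<noteq> []"
  shows "walk E (u @ v) \<longleftrightarrow> walk E u \<and> walk E v \<and> {last u, hd v} \<in> E"
  using assms(1)
proof (induct u rule: list_nonempty_induct)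
  case (single a)
  then show ?case using assms(2) by (cases v) (auto simp: walk_Cons2)
next
  case (cons a u)
  then obtain b u' where u: "u = b # u'" by (cases u) auto
  show ?case using cons u by (simp add: walk_Cons2)
qed

lemma walk_len_append:
  assumes "u \<noteq> []" "v \<noteq> []"
  shows "walk_len lam (u @ v) = walk_len lam u + lam {last u, hd v} + walk_len lam v"
  using assms(1)
proof (induct u rule: list_nonempty_induct)
  case (single a)
  then show ?case using assms(2) by (cases v) (auto simp: walk_len_Cons2)
next
  case (cons a u)
  then obtain b u' where u: "u = b # u'" by (cases u) auto
  show ?case using cons u by (simp add: walk_len_Cons2)
qed

lemma walk_len_nonneg:
  assumes "\<forall>e\<in>E. 0 \<le> lam e" "walk E xs"
  shows "0 \<le> walk_len lam xs"
  unfolding walk_len_def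
proof (rule sum_nonneg)
  fix i assume "i \<in> {..<length xs - 1}"
  then have "Suc i < length xs" by auto
  then have "{xs ! i, xs ! Suc i} \<in> E" using assms(2) unfolding walk_def by blast
  then show "0 \<le> lam {xs ! i, xs ! Suc i}" using assms(1) by blast
qed

lemma walk_rev_aux:
  assumes "xs \<noteq> []"
  shows "(walk E (rev xs) \<longleftrightarrow> walk E xs) \<and> walk_len lam (rev xs) = walk_len lam xs"
  using assms
proof (induct xs rule: list_nonempty_induct)
  case (single a) then show ?case by simp
next
  case (cons a xs)
  then obtain b xs' where xs: "xs = b # xs'" by (cases xs) auto
  have l: "last (rev xs) = b" using xs by simp
  have rx: "rev xs \<noteq> []" using xs by simp
  have "walk E (rev (a # xs)) \<longleftrightarrow> walk E (rev xs) \<and> {b, a} \<in> E"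
    using walk_append[OF rx, of "[a]" E] l by simp
  also have "\<dots> \<longleftrightarrow> walk E (a # xs)" using cons xs by (auto simp: walk_Cons2 insert_commute)
  finally have 1: "walk E (rev (a # xs)) \<longleftrightarrow> walk E (a # xs)" .
  have "walk_len lam (rev (a # xs)) = walk_len lam (rev xs) + lam {b, a}"
    using walk_len_append[OF rx, of "[a]" lam] l by simp
  also have "\<dots> = walk_len lam (a # xs)" using cons xs by (simp add: walk_len_Cons2 insert_commute)
  finally show ?case using 1 by simp
qed

lemma walk_rev: "walk E (rev xs) \<longleftrightarrow> walk E xs"
  using walk_rev_aux[of xs E] by (cases "xs = []") (auto simp: walk_def)

lemma walk_len_rev: "xs \<noteq> [] \<Longrightarrow> walk_len lam (rev xs) = walk_len lam xs"
  using walk_rev_aux by blast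

lemma walk_concat:
  assumes "walk E p" "walk E q" "last p = hd q"
  shows "walk E (p @ tl q) \<and> walk_len lam (p @ tl q) = walk_len lam p + walk_len lam q
         \<and> hd (p @ tl q) = hd p \<and> last (p @ tl q) = last q"
proof (cases "tl q = []")
  case True
  then obtain a where q: "q = [a]" using assms(2) walk_nonempty by (cases q) auto
  then show ?thesis using assms by simp
next
  case False
  then obtain a b q' where q: "q = a # b # q'" using assms(2) walk_nonempty
    by (cases q; cases "tl q") auto
  have pne: "p \<noteq> []" using assms(1) walk_nonempty by blast
  have "walk E (p @ (b # q'))" using walk_append[OF pne, of "b # q'" E] assms q
    by (simp add: walk_Cons2)
  moreover have "walk_len lam (p @ (b # q')) = walk_len lam p + walk_len lam q"
    using walk_len_append[OF pne, of "b # q'" lam] assms q by (simp add: walk_len_Cons2)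
  ultimately show ?thesis using q pne by simp
qed

lemma walk_distinct:
  assumes nn: "\<forall>e\<in>E. 0 \<le> lam e" and "walk E xs"
  shows "\<exists>ys. walk E ys \<and> distinct ys \<and> hd ys = hd xs \<and> last ys = last xs \<and> set ys \<subseteq> set xs
              \<and> walk_len lam ys \<le> walk_len lam xs"
  using assms(2)
proof (induct xs)
  case Nil then show ?case by (simp add: walk_def)
next
  case (Cons a rest)
  show ?case
  proof (cases rest)
    case Nil then show ?thesis by (intro exI[of _ "[a]"]) simp
  next
    case (Cons b rest0)
    have e: "{a,b} \<in> E" and wr: "walk E rest" using Cons.prems Cons by (auto simp: walk_Cons2)
    obtain r where r: "walk E r" "distinct r" "hd r = hd rest" "last r = last rest" "set r \<subseteq> set rest"
      "walk_len lam r \<le> walk_len lam rest" using Cons.hyps wr by blast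
    have lenrest: "walk_len lam (a # rest) = lam {a,b} + walk_len lam rest"
      using Cons by (simp add: walk_len_Cons2)
    have lab: "0 \<le> lam {a,b}" using nn e by blast
    have rne: "r \<noteq> []" using r(1) walk_nonempty by blast
    show ?thesis
    proof (cases "a \<in> set r")
      case True
      then obtain u v where ruv: "r = u @ a # v" by (meson split_list)
      have wv: "walk E (a # v)"
      proof (cases "u = []")
        case True then show ?thesis using ruv r(1) by simp
      next
        case False then show ?thesis using walk_append[OF False, of "a # v" E] ruv r(1) by simp
      qed
      have lv: "walk_len lam (a # v) \<le> walk_len lam r"
      proof (cases "u = []")
        case True then show ?thesis using ruv by simp
      next
        case False
        have "walk_len lam r = walk_len lam u + lam {last u, a} + walk_len lam (a # v)"
          using walk_len_append[OF False, of "a # v" lam] ruv by simp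
        moreover have "0 \<le> walk_len lam u" using walk_len_nonneg[OF nn] walk_append[OF False, of "a # v" E] ruv r(1) by simp
        moreover have "0 \<le> lam {last u, a}" using nn walk_append[OF False, of "a # v" E] ruv r(1) by simp
        ultimately show ?thesis by simp
      qed
      have "last (a # v) = last r" using ruv by (cases v) auto
      then show ?thesis using wv lv r ruv lenrest lab Cons
        by (intro exI[of _ "a # v"]) auto
    next
      case False
      obtain c r' where rc: "r = c # r'" using rne by (cases r) auto
      have "c = b" using r(3) rc Cons by simp
      then have "walk E (a # r)" using rc r(1) e by (simp add: walk_Cons2)
      moreover have "walk_len lam (a # r) = lam {a,b} + walk_len lam r" using rc \<open>c = b\<close> by (simp add: walk_len_Cons2)
      ultimately show ?thesis using r False lenrest Cons rne
        by (intro exI[of _ "a # r"]) auto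
    qed
  qed
qed



lemma dist_le:
  assumes nn: "\<forall>e\<in>E. 0 \<le> lam e" and "walk E xs" "hd xs = u" "last xs = v"
  shows "dist_T E lam u v \<le> walk_len lam xs"
  unfolding dist_T_def
proof (rule cInf_lower)
  show "walk_len lam xs \<in> {walk_len lam xs |xs. walk E xs \<and> hd xs = u \<and> last xs = v}"
    using assms by blast
  show "bdd_below {walk_len lam xs |xs. walk E xs \<and> hd xs = u \<and> last xs = v}"
    by (rule bdd_belowI[of _ 0]) (use walk_len_nonneg[OF nn] in blast)
qed

lemma dist_ge:
  assumes "walk E xs0" "hd xs0 = u" "last xs0 = v"
    and "\<And>xs. walk E xs \<Longrightarrow> hd xs = u \<Longrightarrow> last xs = v \<Longrightarrow> c \<le> walk_len lam xs"
  shows "c \<le> dist_T E lam u v"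
  unfolding dist_T_def
  by (rule cInf_greatest) (use assms in blast)+

lemma dist_nonneg:
  assumes nn: "\<forall>e\<in>E. 0 \<le> lam e" and "walk E xs0" "hd xs0 = u" "last xs0 = v"
  shows "0 \<le> dist_T E lam u v"
  using dist_ge[OF assms(2-4)] walk_len_nonneg[OF nn] by blast

lemma dist_self:
  assumes nn: "\<forall>e\<in>E. 0 \<le> lam e"
  shows "dist_T E lam u u = 0"
proof -
  have "dist_T E lam u u \<le> 0" using dist_le[OF nn, of "[u]"] by simp
  moreover have "0 \<le> dist_T E lam u u" using dist_nonneg[OF nn, of "[u]"] by simp
  ultimately show ?thesis by simp
qed

lemma dist_sym: "dist_T E lam u v = dist_T E lam v u"
proof -
  have "{walk_len lam xs |xs. walk E xs \<and> hd xs = u \<and> last xs = v}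
      = {walk_len lam xs |xs. walk E xs \<and> hd xs = v \<and> last xs = u}" (is "?L = ?R")
  proof
    show "?L \<subseteq> ?R"
    proof
      fix r assume "r \<in> ?L"
      then obtain xs where xs: "r = walk_len lam xs" "walk E xs" "hd xs = u" "last xs = v" by blast
      have ne: "xs \<noteq> []" using xs(2) walk_nonempty by blast
      have "walk E (rev xs)" "hd (rev xs) = v" "last (rev xs) = u" "walk_len lam (rev xs) = r"
        using xs ne walk_rev walk_len_rev by (auto simp: hd_rev last_rev)
      then show "r \<in> ?R" by blast
    qed
  next
    show "?R \<subseteq> ?L"
    proof
      fix r assume "r \<in> ?R"
      then obtain xs where xs: "r = walk_len lam xs" "walk E xs" "hd xs = v" "last xs = u" by blast
      have ne: "xs \<noteq> []" using xs(2) walk_nonempty by blast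
      have "walk E (rev xs)" "hd (rev xs) = u" "last (rev xs) = v" "walk_len lam (rev xs) = r"
        using xs ne walk_rev walk_len_rev by (auto simp: hd_rev last_rev)
      then show "r \<in> ?L" by blast
    qed
  qed
  then show ?thesis unfolding dist_T_def by simp
qed

lemma dist_triangle:
  assumes nn: "\<forall>e\<in>E. 0 \<le> lam e"
    and w1: "walk E p0" "hd p0 = u" "last p0 = v"
    and w2: "walk E q0" "hd q0 = v" "last q0 = w"
  shows "dist_T E lam u w \<le> dist_T E lam u v + dist_T E lam v w"
proof -
  have key: "dist_T E lam u w \<le> walk_len lam p + walk_len lam q"
    if "walk E p" "hd p = u" "last p = v" "walk E q" "hd q = v" "last q = w" for p q
  proof -
    have "walk E (p @ tl q) \<and> walk_len lam (p @ tl q) = walk_len lam p + walk_len lam q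
         \<and> hd (p @ tl q) = hd p \<and> last (p @ tl q) = last q"
      using walk_concat[of E p q lam] that by simp
    then show ?thesis using dist_le[OF nn, of "p @ tl q" u w] that by simp
  qed
  have "dist_T E lam u w - walk_len lam q \<le> dist_T E lam u v"
    if "walk E q" "hd q = v" "last q = w" for q
    by (rule dist_ge[OF w1]) (use key that in fastforce)
  then have "dist_T E lam u w - dist_T E lam u v \<le> dist_T E lam v w"
    by (intro dist_ge[OF w2]) fastforce
  then show ?thesis by simp
qed

lemma dist_edge:
  assumes nn: "\<forall>e\<in>E. 0 \<le> lam e" and "{a,b} \<in> E"
  shows "dist_T E lam a b \<le> lam {a,b}"
  using dist_le[OF nn, of "[a,b]" a b] assms by (simp add: walk_Cons2 walk_len_Cons2)

definition cross_uniq :: "'a set set \<Rightarrow> 'a set \<Rightarrow> 'a \<Rightarrow> 'a \<Rightarrow> bool" where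
  "cross_uniq E C a0 b0 \<longleftrightarrow> (\<forall>a b. {a,b} \<in> E \<longrightarrow> a \<in> C \<longrightarrow> b \<notin> C \<longrightarrow> a = a0 \<and> b = b0)"

lemma walk_exit:
  assumes cu: "cross_uniq E C a0 b0"
  shows "walk E xs \<Longrightarrow> hd xs \<in> C \<Longrightarrow> last xs \<notin> C \<Longrightarrow>
     \<exists>u v. xs = u @ v \<and> u \<noteq> [] \<and> v \<noteq> [] \<and> last u = a0 \<and> hd v = b0"
proof (induct xs)
  case Nil then show ?case by (simp add: walk_def)
next
  case (Cons a rest)
  show ?case
  proof (cases rest)
    case Nil then show ?thesis using Cons.prems by simp
  next
    case (Cons b rest0)
    have e: "{a,b} \<in> E" and wr: "walk E rest" using Cons.prems Cons by (auto simp: walk_Cons2)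
    show ?thesis
    proof (cases "b \<in> C")
      case False
      then have "a = a0 \<and> b = b0" using cu e Cons.prems unfolding cross_uniq_def by auto
      then show ?thesis using Cons by (intro exI[of _ "[a]"] exI[of _ rest]) auto
    next
      case True
      have "last rest \<notin> C" using Cons.prems Cons by simp
      then obtain u v where "rest = u @ v" "u \<noteq> []" "v \<noteq> []" "last u = a0" "hd v = b0"
        using Cons.hyps wr True Cons by auto
      then show ?thesis by (intro exI[of _ "a # u"] exI[of _ v]) auto
    qed
  qed
qed

lemma walk_prefix: "walk E (u @ v) \<Longrightarrow> u \<noteq> [] \<Longrightarrow> walk E u"
  by (cases "v = []") (auto simp: walk_append)

lemma walk_suffix: "walk E (u @ v) \<Longrightarrow> v \<noteq> [] \<Longrightarrow> walk E v"
  by (cases "u = []") (auto simp: walk_append)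

lemma walk_stay:
  assumes cu: "cross_uniq E C a0 b0" and a0: "a0 \<in> C"
    and w: "walk E xs" "distinct xs" "hd xs \<in> C" "last xs \<in> C"
  shows "set xs \<subseteq> C"
proof
  fix z assume z: "z \<in> set xs"
  show "z \<in> C"
  proof (rule ccontr)
    assume zC: "z \<notin> C"
    obtain u v where xs: "xs = u @ z # v" using z by (meson split_list)
    have une: "u \<noteq> []" using xs w(3) zC by (cases u) auto
    have w1: "walk E (u @ [z])" using walk_prefix[of E "u @ [z]" v] w(1) xs by simp
    obtain u1 v1 where d1: "u @ [z] = u1 @ v1" "u1 \<noteq> []" "v1 \<noteq> []" "last u1 = a0"
      using walk_exit[OF cu w1] une w(3) zC xs by auto
    have "a0 \<in> set u1" using d1 by auto
    then have "a0 \<in> set (u @ [z])" using d1(1) by (metis Un_iff set_append)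
    then have a0u: "a0 \<in> set u" using a0 zC by auto
    have w2: "walk E (z # v)" using walk_suffix[of E u "z # v"] w(1) xs by simp
    have vne: "v \<noteq> []" using xs w(4) zC by auto
    have w2r: "walk E (rev (z # v))" using w2 walk_rev by blast
    have "hd (rev (z # v)) \<in> C" using w(4) xs vne by (simp add: hd_rev)
    moreover have "last (rev (z # v)) \<notin> C" using zC by (simp add: last_rev)
    ultimately obtain u2 v2 where d2: "rev (z # v) = u2 @ v2" "u2 \<noteq> []" "last u2 = a0"
      using walk_exit[OF cu w2r] by blast
    have "a0 \<in> set u2" using d2 by auto
    then have "a0 \<in> set (z # v)" using d2(1) by (metis Un_iff set_append set_rev)
    then have "a0 \<in> set v" using a0 zC by auto
    then show False using a0u w(2) xs by auto
  qed
qed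

lemma walk_within:
  assumes nn: "\<forall>e\<in>E. 0 \<le> lam e" and cu: "cross_uniq E C a0 b0" and a0: "a0 \<in> C"
    and w: "walk E xs" "hd xs \<in> C" "last xs \<in> C"
  shows "\<exists>ys. walk E ys \<and> distinct ys \<and> hd ys = hd xs \<and> last ys = last xs \<and> set ys \<subseteq> C
              \<and> walk_len lam ys \<le> walk_len lam xs"
proof -
  obtain ys where ys: "walk E ys" "distinct ys" "hd ys = hd xs" "last ys = last xs"
      "walk_len lam ys \<le> walk_len lam xs"
    using walk_distinct[OF nn w(1)] by blast
  have "set ys \<subseteq> C" using walk_stay[OF cu a0 ys(1,2)] ys w by simp
  then show ?thesis using ys by blast
qed

lemma walk_agree:
  assumes "walk E1 xs" "set xs \<subseteq> C"
    and ag: "\<forall>a b. a \<in> C \<longrightarrow> b \<in> C \<longrightarrow> {a,b} \<in> E1 \<longrightarrow> {a,b} \<in> E2 \<and> lam2 {a,b} = lam1 {a,b}"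
  shows "walk E2 xs \<and> walk_len lam2 xs = walk_len lam1 xs"
proof -
  have e: "{xs ! i, xs ! Suc i} \<in> E2 \<and> lam2 {xs ! i, xs ! Suc i} = lam1 {xs ! i, xs ! Suc i}"
    if "Suc i < length xs" for i
  proof -
    have "xs ! i \<in> C" "xs ! Suc i \<in> C" using that assms(2) nth_mem by (metis Suc_lessD subsetD)+
    moreover have "{xs ! i, xs ! Suc i} \<in> E1" using assms(1) that unfolding walk_def by blast
    ultimately show ?thesis using ag by blast
  qed
  have "walk E2 xs" using assms(1) e unfolding walk_def by blast
  moreover have "walk_len lam2 xs = walk_len lam1 xs" unfolding walk_len_def
    by (rule sum.cong) (use e in auto)
  ultimately show ?thesis by blast
qed

lemma dist_transfer:
  assumes nn1: "\<forall>e\<in>E1. 0 \<le> lam1 e" and nn2: "\<forall>e\<in>E2. 0 \<le> lam2 e"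
    and cu: "cross_uniq E1 C a0 b0" and a0: "a0 \<in> C" and u: "u \<in> C" and v: "v \<in> C"
    and ag: "\<forall>a b. a \<in> C \<longrightarrow> b \<in> C \<longrightarrow> {a,b} \<in> E1 \<longrightarrow> {a,b} \<in> E2 \<and> lam2 {a,b} = lam1 {a,b}"
    and w: "walk E1 xs0" "hd xs0 = u" "last xs0 = v"
  shows "dist_T E2 lam2 u v \<le> dist_T E1 lam1 u v"
proof (rule dist_ge[OF w])
  fix xs assume xs: "walk E1 xs" "hd xs = u" "last xs = v"
  obtain ys where ys: "walk E1 ys" "hd ys = u" "last ys = v" "set ys \<subseteq> C"
      "walk_len lam1 ys \<le> walk_len lam1 xs"
    using walk_within[OF nn1 cu a0 xs(1)] xs u v by auto
  have "walk E2 ys \<and> walk_len lam2 ys = walk_len lam1 ys" using walk_agree[OF ys(1,4) ag] .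
  then show "dist_T E2 lam2 u v \<le> walk_len lam1 xs"
    using dist_le[OF nn2, of ys u v] ys by simp
qed

lemma cut_dist:
  assumes nn: "\<forall>e\<in>E. 0 \<le> lam e" and cu: "cross_uniq E C a0 b0" and e: "{a0,b0} \<in> E"
    and a: "a \<in> C" and b: "b \<notin> C"
    and w1: "walk E p0" "hd p0 = a" "last p0 = a0"
    and w2: "walk E q0" "hd q0 = b0" "last q0 = b"
  shows "dist_T E lam a b = dist_T E lam a a0 + lam {a0,b0} + dist_T E lam b0 b"
proof -
  have cat: "walk E (p @ q) \<and> walk_len lam (p @ q) = walk_len lam p + lam {a0,b0} + walk_len lam q
      \<and> hd (p @ q) = a \<and> last (p @ q) = b"
    if "walk E p" "hd p = a" "last p = a0" "walk E q" "hd q = b0" "last q = b" for p q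
  proof -
    have "p \<noteq> []" "q \<noteq> []" using that walk_nonempty by blast+
    then show ?thesis using walk_append[of p q E] walk_len_append[of p q lam] that e by simp
  qed
  have le1: "dist_T E lam a b - lam {a0,b0} - walk_len lam q \<le> dist_T E lam a a0"
    if "walk E q" "hd q = b0" "last q = b" for q
  proof (rule dist_ge[OF w1])
    fix p assume "walk E p" "hd p = a" "last p = a0"
    then show "dist_T E lam a b - lam {a0, b0} - walk_len lam q \<le> walk_len lam p"
      using cat[of p q] that dist_le[OF nn, of "p @ q" a b] by simp
  qed
  have "dist_T E lam a b - lam {a0,b0} - dist_T E lam a a0 \<le> dist_T E lam b0 b"
    by (rule dist_ge[OF w2]) (use le1 in fastforce)
  moreover have "dist_T E lam a a0 + lam {a0,b0} + dist_T E lam b0 b \<le> dist_T E lam a b"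
  proof -
    have ex: "walk E (p0 @ q0)" "hd (p0 @ q0) = a" "last (p0 @ q0) = b" using cat[OF w1 w2] by auto
    have "dist_T E lam a a0 + lam {a0,b0} + dist_T E lam b0 b \<le> walk_len lam xs"
      if xsw: "walk E xs" "hd xs = a" "last xs = b" for xs
    proof -
      obtain u v where uv: "xs = u @ v" "u \<noteq> []" "v \<noteq> []" "last u = a0" "hd v = b0"
        using walk_exit[OF cu xsw(1)] xsw a b by auto
      have wu: "walk E u" and wv: "walk E v" using uv xsw(1) walk_append by blast+
      have "hd u = a" using uv xsw by simp
      have "last v = b" using uv xsw by simp
      have "walk_len lam xs = walk_len lam u + lam {a0,b0} + walk_len lam v"
        using walk_len_append[OF uv(2,3)] uv by simp
      moreover have "dist_T E lam a a0 \<le> walk_len lam u" using dist_le[OF nn wu \<open>hd u = a\<close> uv(4)] .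
      moreover have "dist_T E lam b0 b \<le> walk_len lam v" using dist_le[OF nn wv uv(5) \<open>last v = b\<close>] .
      ultimately show ?thesis by simp
    qed
    then show ?thesis using dist_ge[OF ex] by blast
  qed
  ultimately show ?thesis by simp
qed



lemma tree_edge:
  assumes "is_tree V E" "{a,b} \<in> E"
  shows "a \<in> V \<and> b \<in> V \<and> a \<noteq> b"
proof -
  obtain u v where "{a,b} = {u,v}" "u \<noteq> v" "u \<in> V" "v \<in> V"
    using assms unfolding is_tree_def by blast
  then show ?thesis by (auto simp: doubleton_eq_iff)
qed

lemma tree_nn: "\<forall>e\<in>E. (0::real) \<le> (\<lambda>_. 0) e" by simp

lemma walk_in_V:
  assumes t: "is_tree V E"
  shows "walk E xs \<Longrightarrow> hd xs \<in> V \<Longrightarrow> set xs \<subseteq> V"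
proof (induct xs)
  case Nil then show ?case by simp
next
  case (Cons a rest)
  show ?case
  proof (cases rest)
    case Nil then show ?thesis using Cons by simp
  next
    case (Cons b rest0)
    then have "{a,b} \<in> E" "walk E rest" using Cons.prems by (auto simp: walk_Cons2)
    then have "b \<in> V" using tree_edge[OF t] by blast
    then have "set rest \<subseteq> V" using Cons.hyps \<open>walk E rest\<close> Cons by simp
    then show ?thesis using Cons.prems by simp
  qed
qed

lemma comp_props:
  assumes t: "is_tree V E" and e: "{p,q} \<in> E"
  shows "p \<in> comp_without E q p" "q \<notin> comp_without E q p" "comp_without E q p \<subseteq> V"
proof -
  have pq: "p \<in> V" "q \<in> V" "p \<noteq> q" using tree_edge[OF t e] by auto
  show "p \<in> comp_without E q p" unfolding comp_without_def using pq
    by (intro CollectI exI[of _ "[p]"]) simp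
  show "q \<notin> comp_without E q p" unfolding comp_without_def
    using walk_nonempty last_in_set by fastforce
  show "comp_without E q p \<subseteq> V"
  proof
    fix v assume "v \<in> comp_without E q p"
    then obtain xs where "walk E xs" "hd xs = p" "last xs = v" unfolding comp_without_def by blast
    then show "v \<in> V" using walk_in_V[OF t] pq walk_nonempty by (metis last_in_set subsetD)
  qed
qed

lemma tree_cross:
  assumes t: "is_tree V E" and e: "{p,q} \<in> E"
  shows "cross_uniq E (comp_without E q p) p q"
  unfolding cross_uniq_def
proof (intro allI impI)
  fix a b assume ab: "{a,b} \<in> E" and a: "a \<in> comp_without E q p" and b: "b \<notin> comp_without E q p"
  obtain xs where xs: "walk E xs" "hd xs = p" "last xs = a" "q \<notin> set xs"
    using a unfolding comp_without_def by blast
  have xne: "xs \<noteq> []" using xs walk_nonempty by blast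
  have bq: "b = q"
  proof (rule ccontr)
    assume "b \<noteq> q"
    have "walk E (xs @ [b])" using walk_append[OF xne, of "[b]" E] xs ab by simp
    moreover have "hd (xs @ [b]) = p" "last (xs @ [b]) = b" "q \<notin> set (xs @ [b])"
      using xs xne \<open>b \<noteq> q\<close> by auto
    ultimately have "b \<in> comp_without E q p" unfolding comp_without_def by blast
    then show False using b by blast
  qed
  have ap: "a = p"
  proof (rule ccontr)
    assume "a \<noteq> p"
    obtain ys where ys: "walk E ys" "distinct ys" "hd ys = p" "last ys = a" "set ys \<subseteq> set xs"
      using walk_distinct[OF tree_nn xs(1)] xs by blast
    have yne: "ys \<noteq> []" using ys walk_nonempty by blast
    have qy: "q \<notin> set ys" using ys xs by blast
    have l2: "length ys \<ge> 2"
    proof (rule ccontr)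
      assume "\<not> length ys \<ge> 2"
      then have "length ys = 1" using yne by (cases ys) (auto simp: Suc_le_eq)
      then obtain z where "ys = [z]" by (cases ys) auto
      then show False using ys \<open>a \<noteq> p\<close> by simp
    qed
    have "is_cycle E (ys @ [q])" unfolding is_cycle_def
    proof (intro conjI)
      show "walk E (ys @ [q])" using walk_append[OF yne, of "[q]" E] ys ab bq by simp
      show "distinct (ys @ [q])" using ys qy by simp
      show "3 \<le> length (ys @ [q])" using l2 by simp
      show "{last (ys @ [q]), hd (ys @ [q])} \<in> E" using e ys yne by (simp add: insert_commute)
    qed
    then show False using t unfolding is_tree_def by blast
  qed
  show "a = p \<and> b = q" using ap bq by blast
qed

lemma tree_conn:
  assumes "is_tree V E" "u \<in> V" "v \<in> V"
  shows "\<exists>xs. walk E xs \<and> hd xs = u \<and> last xs = v"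
  using assms unfolding is_tree_def by blast

lemma tree_cut:
  assumes t: "is_tree V E" and nn: "\<forall>e\<in>E. 0 \<le> lam e" and e: "{p,q} \<in> E"
    and a: "a \<in> comp_without E q p" and b: "b \<in> V" "b \<notin> comp_without E q p"
  shows "dist_T E lam a b = dist_T E lam a p + lam {p,q} + dist_T E lam q b"
proof -
  have "a \<in> V" using comp_props[OF t e] a by blast
  have pq: "p \<in> V" "q \<in> V" using tree_edge[OF t e] by auto
  obtain p0 where "walk E p0" "hd p0 = a" "last p0 = p" using tree_conn[OF t \<open>a \<in> V\<close> pq(1)] by blast
  moreover obtain q0 where "walk E q0" "hd q0 = q" "last q0 = b" using tree_conn[OF t pq(2) b(1)] by blast
  ultimately show ?thesis using cut_dist[OF nn tree_cross[OF t e] e a b(2)] by blast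
qed



locale L =
  fixes V :: "'a set" and E :: "'a set set" and lam :: "'a set \<Rightarrow> real"
    and k :: nat and U S :: "nat \<Rightarrow> 'a set" and x y y' :: 'a and eps :: real
    and s' s :: "nat \<Rightarrow> 'a"
  assumes inst: "gv_instance V E lam k U S"
    and k1: "1 \<le> k"
    and SW: "\<forall>i\<in>{1..k}. S i \<subseteq> W_set k U i"
    and xyEs: "{x, y} \<in> E_set E k U 1"
    and xW: "x \<in> W_set k U 1"
    and yU: "y \<in> U 1 - W_set k U 1"
    and eps_pos: "0 < eps"
    and eps_res: "ereal eps < res E lam k U S"
    and y'_new: "y' \<notin> V"
    and sol: "is_solution V E lam k U S s"
    and sol': "is_solution (exp_V V y') (exp_E E x y y') (exp_lam lam x y y' eps) k
                 (exp_U V E U x y y') S s'"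
begin

abbreviation "d \<equiv> dist_T E lam"
abbreviation "E' \<equiv> exp_E E x y y'"
abbreviation "lam' \<equiv> exp_lam lam x y y' eps"
abbreviation "d' \<equiv> dist_T E' lam'"
abbreviation "A \<equiv> comp_without E y x"
abbreviation "B \<equiv> V - A"
abbreviation "V' \<equiv> exp_V V y'"
abbreviation "U' \<equiv> exp_U V E U x y y'"

lemma tree: "is_tree V E" using inst unfolding gv_instance_def by blast
lemma lampos: "\<forall>e\<in>E. 0 < lam e" using inst unfolding gv_instance_def by blast
lemma nn: "\<forall>e\<in>E. 0 \<le> lam e" using lampos by auto
lemma UV: "i \<in> {1..k} \<Longrightarrow> U i \<subseteq> V" using inst unfolding gv_instance_def by blast
lemma SV: "i \<in> {1..k} \<Longrightarrow> S i \<subseteq> V" using inst unfolding gv_instance_def by blast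
lemma Vfin: "finite V" using tree unfolding is_tree_def by blast

lemma xyE: "{x,y} \<in> E"
proof -
  obtain u v where "{x,y} = {u,v}" "{u,v} \<in> E" using xyEs unfolding E_set_def by blast
  then show ?thesis by simp
qed

lemma xy: "x \<in> V" "y \<in> V" "x \<noteq> y" using tree_edge[OF tree xyE] by auto
lemma lxy: "0 < lam {x,y}" using lampos xyE by blast

lemma xA: "x \<in> A" using comp_props[OF tree xyE] by blast
lemma yA: "y \<notin> A" using comp_props[OF tree xyE] by blast
lemma AV: "A \<subseteq> V" using comp_props[OF tree xyE] by blast
lemma yB: "y \<in> B" using yA xy by blast
lemma y'A: "y' \<notin> A" using AV y'_new by blast
lemma crossA: "cross_uniq E A x y" using tree_cross[OF tree xyE] .

lemma cutA: "a \<in> A \<Longrightarrow> b \<in> B \<Longrightarrow> d a b = d a x + lam {x,y} + d y b"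
  using tree_cut[OF tree nn xyE] by blast

lemma crossB: "cross_uniq E B y x"
  unfolding cross_uniq_def
proof (intro allI impI)
  fix a b assume ab: "{a,b} \<in> E" "a \<in> B" "b \<notin> B"
  have "b \<in> V" using tree_edge[OF tree ab(1)] by blast
  then have "b \<in> A" using ab by blast
  moreover have "{b,a} \<in> E" using ab by (simp add: insert_commute)
  ultimately have "b = x \<and> a = y" using crossA ab unfolding cross_uniq_def by blast
  then show "a = y \<and> b = x" by blast
qed

lemma conn: "u \<in> V \<Longrightarrow> v \<in> V \<Longrightarrow> \<exists>xs. walk E xs \<and> hd xs = u \<and> last xs = v"
  using tree_conn[OF tree] by blast

lemma dsym: "d a b = d b a" by (rule dist_sym)
lemma d'sym: "d' a b = d' b a" by (rule dist_sym)

lemma dtri: "a \<in> V \<Longrightarrow> b \<in> V \<Longrightarrow> c \<in> V \<Longrightarrow> d a c \<le> d a b + d b c"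
proof -
  assume h: "a \<in> V" "b \<in> V" "c \<in> V"
  obtain p where p: "walk E p" "hd p = a" "last p = b" using conn h by blast
  obtain q where q: "walk E q" "hd q = b" "last q = c" using conn h by blast
  show ?thesis using dist_triangle[OF nn p q] .
qed

lemma dself: "d a a = 0" using dist_self[OF nn] .
lemma dnn: "a \<in> V \<Longrightarrow> b \<in> V \<Longrightarrow> 0 \<le> d a b"
proof -
  assume h: "a \<in> V" "b \<in> V"
  obtain p where p: "walk E p" "hd p = a" "last p = b" using conn h by blast
  show ?thesis using dist_nonneg[OF nn p] .
qed

lemma dedge: "{a,b} \<in> E \<Longrightarrow> d a b \<le> lam {a,b}" using dist_edge[OF nn] .

lemma E'_iff: "e \<in> E' \<longleftrightarrow> (e \<in> E \<and> e \<noteq> {x,y}) \<or> e = {x,y'} \<or> e = {y,y'}"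
  unfolding exp_E_def by blast

lemma lam'_xy': "lam' {x,y'} = lam {x,y}" unfolding exp_lam_def by simp
lemma lam'_yy': "lam' {y,y'} = eps"
proof -
  have "{y,y'} \<noteq> {x,y'}" using xy by (auto simp: doubleton_eq_iff)
  then show ?thesis unfolding exp_lam_def by simp
qed

lemma nn': "\<forall>e\<in>E'. 0 \<le> lam' e"
proof
  fix e assume "e \<in> E'"
  then consider "e \<in> E" "e \<noteq> {x,y}" | "e = {x,y'}" | "e = {y,y'}" using E'_iff by blast
  then show "0 \<le> lam' e"
  proof cases
    case 1
    then show ?thesis using nn lxy eps_pos unfolding exp_lam_def by auto
  next
    case 2 then show ?thesis using lam'_xy' lxy by simp
  next
    case 3 then show ?thesis using lam'_yy' eps_pos by simp
  qed
qed

lemma y'_ne: "y' \<noteq> x" "y' \<noteq> y" using xy y'_new by auto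

lemma crossA': "cross_uniq E' A x y'"
  unfolding cross_uniq_def
proof (intro allI impI)
  fix a b assume ab: "{a,b} \<in> E'" "a \<in> A" "b \<notin> A"
  have aV: "a \<in> V" using ab AV by blast
  consider "{a,b} \<in> E" "{a,b} \<noteq> {x,y}" | "{a,b} = {x,y'}" | "{a,b} = {y,y'}" using ab E'_iff by blast
  then show "a = x \<and> b = y'"
  proof cases
    case 1
    then have "a = x \<and> b = y" using crossA ab unfolding cross_uniq_def by blast
    then show ?thesis using 1 by simp
  next
    case 2 then show ?thesis using aV y'_new by (auto simp: doubleton_eq_iff)
  next
    case 3 then show ?thesis using ab yA y'A by (auto simp: doubleton_eq_iff)
  qed
qed

lemma crossB': "cross_uniq E' B y y'"
  unfolding cross_uniq_def
proof (intro allI impI)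
  fix a b assume ab: "{a,b} \<in> E'" "a \<in> B" "b \<notin> B"
  consider "{a,b} \<in> E" "{a,b} \<noteq> {x,y}" | "{a,b} = {x,y'}" | "{a,b} = {y,y'}" using ab E'_iff by blast
  then show "a = y \<and> b = y'"
  proof cases
    case 1
    then have "a = y \<and> b = x" using crossB ab unfolding cross_uniq_def by blast
    then show ?thesis using 1 by (simp add: insert_commute)
  next
    case 2 then show ?thesis using ab xA y'_new by (auto simp: doubleton_eq_iff)
  next
    case 3 then show ?thesis using ab y'_new by (auto simp: doubleton_eq_iff)
  qed
qed

lemma agreeA: "\<forall>a b. a \<in> A \<longrightarrow> b \<in> A \<longrightarrow> {a,b} \<in> E \<longrightarrow> {a,b} \<in> E' \<and> lam' {a,b} = lam {a,b}"
proof (intro allI impI)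
  fix a b assume h: "a \<in> A" "b \<in> A" "{a,b} \<in> E"
  have 1: "{a,b} \<noteq> {x,y}" using h yA by (auto simp: doubleton_eq_iff)
  have 2: "{a,b} \<noteq> {x,y'}" "{a,b} \<noteq> {y,y'}" using h y'A by (auto simp: doubleton_eq_iff)
  show "{a,b} \<in> E' \<and> lam' {a,b} = lam {a,b}" using h 1 2 E'_iff unfolding exp_lam_def by auto
qed

lemma agreeA': "\<forall>a b. a \<in> A \<longrightarrow> b \<in> A \<longrightarrow> {a,b} \<in> E' \<longrightarrow> {a,b} \<in> E \<and> lam {a,b} = lam' {a,b}"
proof (intro allI impI)
  fix a b assume h: "a \<in> A" "b \<in> A" "{a,b} \<in> E'"
  have 2: "{a,b} \<noteq> {x,y'}" "{a,b} \<noteq> {y,y'}" using h y'A by (auto simp: doubleton_eq_iff)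
  show "{a,b} \<in> E \<and> lam {a,b} = lam' {a,b}" using h 2 E'_iff unfolding exp_lam_def by auto
qed

lemma agreeB: "\<forall>a b. a \<in> B \<longrightarrow> b \<in> B \<longrightarrow> {a,b} \<in> E \<longrightarrow> {a,b} \<in> E' \<and> lam' {a,b} = lam {a,b}"
proof (intro allI impI)
  fix a b assume h: "a \<in> B" "b \<in> B" "{a,b} \<in> E"
  have 1: "{a,b} \<noteq> {x,y}" using h xA by (auto simp: doubleton_eq_iff)
  have 2: "{a,b} \<noteq> {x,y'}" "{a,b} \<noteq> {y,y'}" using h y'_new by (auto simp: doubleton_eq_iff)
  show "{a,b} \<in> E' \<and> lam' {a,b} = lam {a,b}" using h 1 2 E'_iff unfolding exp_lam_def by auto
qed

lemma agreeB': "\<forall>a b. a \<in> B \<longrightarrow> b \<in> B \<longrightarrow> {a,b} \<in> E' \<longrightarrow> {a,b} \<in> E \<and> lam {a,b} = lam' {a,b}"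
proof (intro allI impI)
  fix a b assume h: "a \<in> B" "b \<in> B" "{a,b} \<in> E'"
  have 2: "{a,b} \<noteq> {x,y'}" "{a,b} \<noteq> {y,y'}" using h y'_new by (auto simp: doubleton_eq_iff)
  show "{a,b} \<in> E \<and> lam {a,b} = lam' {a,b}" using h 2 E'_iff unfolding exp_lam_def by auto
qed

lemma wA: "a \<in> A \<Longrightarrow> b \<in> A \<Longrightarrow> \<exists>xs. walk E xs \<and> hd xs = a \<and> last xs = b \<and> set xs \<subseteq> A"
proof -
  assume ab: "a \<in> A" "b \<in> A"
  then obtain xs where "walk E xs" "hd xs = a" "last xs = b" using conn AV by blast
  then show ?thesis using walk_within[OF nn crossA xA, of xs] ab by auto
qed

lemma wB: "a \<in> B \<Longrightarrow> b \<in> B \<Longrightarrow> \<exists>xs. walk E xs \<and> distinct xs \<and> hd xs = a \<and> last xs = b \<and> set xs \<subseteq> B"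
proof -
  assume ab: "a \<in> B" "b \<in> B"
  then obtain xs where "walk E xs" "hd xs = a" "last xs = b" using conn by blast
  then show ?thesis using walk_within[OF nn crossB yB, of xs] ab by auto
qed

lemma wA': "a \<in> A \<Longrightarrow> b \<in> A \<Longrightarrow> \<exists>xs. walk E' xs \<and> hd xs = a \<and> last xs = b"
  using wA walk_agree[OF _ _ agreeA] by meson

lemma wB': "a \<in> B \<Longrightarrow> b \<in> B \<Longrightarrow> \<exists>xs. walk E' xs \<and> hd xs = a \<and> last xs = b"
  using wB walk_agree[OF _ _ agreeB] by meson

lemma D1A: "a \<in> A \<Longrightarrow> b \<in> A \<Longrightarrow> d' a b = d a b"
proof -
  assume ab: "a \<in> A" "b \<in> A"
  obtain xs where xs: "walk E xs" "hd xs = a" "last xs = b" using conn ab AV by blast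
  obtain ys where ys: "walk E' ys" "hd ys = a" "last ys = b" using wA' ab by blast
  have "d' a b \<le> d a b" using dist_transfer[OF nn nn' crossA xA ab agreeA xs] .
  moreover have "d a b \<le> d' a b" using dist_transfer[OF nn' nn crossA' xA ab agreeA' ys] .
  ultimately show ?thesis by simp
qed

lemma D1B: "a \<in> B \<Longrightarrow> b \<in> B \<Longrightarrow> d' a b = d a b"
proof -
  assume ab: "a \<in> B" "b \<in> B"
  obtain xs where xs: "walk E xs" "hd xs = a" "last xs = b" using conn ab by blast
  obtain ys where ys: "walk E' ys" "hd ys = a" "last ys = b" using wB' ab by blast
  have "d' a b \<le> d a b" using dist_transfer[OF nn nn' crossB yB ab agreeB xs] .
  moreover have "d a b \<le> d' a b" using dist_transfer[OF nn' nn crossB' yB ab agreeB' ys] .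
  ultimately show ?thesis by simp
qed

lemma xy'E': "{x,y'} \<in> E'" and yy'E': "{y,y'} \<in> E'" using E'_iff by auto

lemma d'self: "d' a a = 0" using dist_self[OF nn'] .

lemma D3B: "b \<in> B \<Longrightarrow> d' b y' = d b y + eps"
proof -
  assume b: "b \<in> B"
  obtain p where p: "walk E' p" "hd p = b" "last p = y" using wB' b yB by blast
  have w1: "walk E' [y']" "hd [y'] = y'" "last [y'] = y'" by simp_all
  have y'B: "y' \<notin> B" using y'_new by blast
  have "d' b y' = d' b y + lam' {y,y'} + d' y' y'"
    using cut_dist[OF nn' crossB' yy'E' b y'B p w1] .
  then show ?thesis using lam'_yy' d'self D1B[OF b yB] by simp
qed

lemma wy'B: "b \<in> B \<Longrightarrow> \<exists>q. walk E' q \<and> hd q = y' \<and> last q = b"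
proof -
  assume b: "b \<in> B"
  obtain p where p: "walk E' p" "hd p = y" "last p = b" using wB' b yB by blast
  have pne: "p \<noteq> []" using p walk_nonempty by blast
  have "walk E' ([y'] @ p)" using walk_append[of "[y']" p E'] pne p yy'E' by (simp add: insert_commute)
  then show ?thesis using p pne by (intro exI[of _ "y' # p"]) simp
qed

lemma D2: "a \<in> A \<Longrightarrow> b \<in> B \<Longrightarrow> d' a b = d a b + eps"
proof -
  assume a: "a \<in> A" and b: "b \<in> B"
  obtain p where p: "walk E' p" "hd p = a" "last p = x" using wA' a xA by blast
  obtain q where q: "walk E' q" "hd q = y'" "last q = b" using wy'B b by blast
  have bA: "b \<notin> A" using b by blast
  have "d' a b = d' a x + lam' {x,y'} + d' y' b"
    using cut_dist[OF nn' crossA' xy'E' a bA p q] .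
  also have "d' y' b = d b y + eps" using D3B[OF b] d'sym by metis
  also have "d' a x = d a x" using D1A[OF a xA] .
  finally have "d' a b = d a x + lam {x,y} + d b y + eps" using lam'_xy' by simp
  then show ?thesis using cutA[OF a b] dsym[of b y] by simp
qed

lemma D2': "b \<in> B \<Longrightarrow> a \<in> A \<Longrightarrow> d' b a = d b a + eps"
  using D2 dsym d'sym by metis

lemma D3A: "a \<in> A \<Longrightarrow> d' a y' = d a y"
proof -
  assume a: "a \<in> A"
  obtain p where p: "walk E' p" "hd p = a" "last p = x" using wA' a xA by blast
  have "d' a y' = d' a x + lam' {x,y'} + d' y' y'"
    using cut_dist[OF nn' crossA' xy'E' a y'A p, of "[y']"] by simp
  moreover have "d a y = d a x + lam {x,y} + d y y" using cutA[OF a yB] .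
  ultimately show ?thesis using D1A[OF a xA] lam'_xy' d'self dself by simp
qed

end


context L begin

abbreviation "K \<equiv> {1..k}"
abbreviation "f m v \<equiv> d (s' m) v"
abbreviation "g m v \<equiv> d (s m) v"
abbreviation "h m v \<equiv> d' (s' m) v"

lemma one_K: "1 \<in> K" using k1 by simp

lemma sol'_i: "i \<in> K \<Longrightarrow> s' i \<in> S i \<and> U' i = cell V' E' lam' (s' i) (s' ` K)"
  using sol' unfolding is_solution_def by blast

lemma sol_i: "i \<in> K \<Longrightarrow> s i \<in> S i \<and> U i = cell V E lam (s i) (s ` K)"
  using sol unfolding is_solution_def by blast

lemma memU': "i \<in> K \<Longrightarrow> v \<in> U' i \<longleftrightarrow> v \<in> V' \<and> (\<forall>m\<in>K. h i v \<le> h m v)"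
  using sol'_i unfolding cell_def by auto

lemma memU: "i \<in> K \<Longrightarrow> v \<in> U i \<longleftrightarrow> v \<in> V \<and> (\<forall>m\<in>K. g i v \<le> g m v)"
  using sol_i unfolding cell_def by auto

lemma U'1: "U' 1 = insert y' (U 1 \<inter> A \<inter> V)" unfolding exp_U_def by simp
lemma U'i: "i \<noteq> 1 \<Longrightarrow> U' i = U i" unfolding exp_U_def by simp
lemma V'_def: "V' = insert y' V" unfolding exp_V_def by simp

lemma s'V: "i \<in> K \<Longrightarrow> s' i \<in> V" using sol'_i SV by blast
lemma sV: "i \<in> K \<Longrightarrow> s i \<in> V" using sol_i SV by blast

lemma s'W: "i \<in> K \<Longrightarrow> s' i \<in> W_set k U i" using sol'_i SW by blast

lemma WU: "i \<in> K \<Longrightarrow> W_set k U i \<subseteq> U i" unfolding W_set_def by blast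
lemma W_notin: "i \<in> K \<Longrightarrow> j \<in> K \<Longrightarrow> j \<noteq> i \<Longrightarrow> v \<in> W_set k U i \<Longrightarrow> v \<notin> U j"
  unfolding W_set_def by blast

lemma hf: "m \<in> K \<Longrightarrow> v \<in> V \<Longrightarrow> h m v = f m v + (if (s' m \<in> A) = (v \<in> A) then 0 else eps)"
proof -
  assume m: "m \<in> K" and v: "v \<in> V"
  have sm: "s' m \<in> V" using s'V m .
  consider "s' m \<in> A" "v \<in> A" | "s' m \<in> A" "v \<notin> A" | "s' m \<notin> A" "v \<in> A" | "s' m \<notin> A" "v \<notin> A" by blast
  then show ?thesis
  proof cases
    case 1 then show ?thesis using D1A by simp
  next
    case 2 then show ?thesis using D2 v by simp
  next
    case 3 then show ?thesis using D2' sm by simp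
  next
    case 4 then show ?thesis using D1B v sm by simp
  qed
qed

lemma hy': "m \<in> K \<Longrightarrow> h m y' = f m y + (if s' m \<in> A then 0 else eps)"
  using D3A D3B s'V by auto

lemma fnn: "m \<in> K \<Longrightarrow> v \<in> V \<Longrightarrow> 0 \<le> f m v" using dnn s'V by blast

lemma h_ge_f: "m \<in> K \<Longrightarrow> v \<in> V \<Longrightarrow> f m v \<le> h m v" using hf eps_pos by auto
lemma h_le_f: "m \<in> K \<Longrightarrow> v \<in> V \<Longrightarrow> h m v \<le> f m v + eps" using hf eps_pos by auto

lemma s'1A: "s' 1 \<in> A"
proof -
  have sv: "s' 1 \<in> V" using s'V one_K .
  have "\<forall>m\<in>K. h 1 (s' 1) \<le> h m (s' 1)"
  proof
    fix m assume m: "m \<in> K"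
    have "h 1 (s' 1) = 0" using d'self by simp
    also have "0 \<le> f m (s' 1)" using fnn m sv .
    also have "\<dots> \<le> h m (s' 1)" using h_ge_f m sv .
    finally show "h 1 (s' 1) \<le> h m (s' 1)" .
  qed
  then have "s' 1 \<in> U' 1" using memU'[OF one_K] sv V'_def by simp
  then show ?thesis using U'1 sv y'_new by auto
qed

lemma x_U1: "x \<in> U 1" and y_U1: "y \<in> U 1" using xW yU WU one_K by auto

lemma s1A: "s 1 \<in> A"
proof (rule ccontr)
  assume "s 1 \<notin> A"
  then have sB: "s 1 \<in> B" using sV one_K by blast
  obtain j where j: "j \<in> K" "j \<noteq> 1" "y \<in> U j" using yU unfolding W_set_def by blast
  have "g 1 y \<le> g j y" using memU[OF one_K] y_U1 j by blast
  moreover have "g j y \<le> g 1 y" using memU[OF j(1)] j one_K by blast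
  ultimately have eq: "g 1 y = g j y" by simp
  have "x \<notin> U j" using W_notin[OF one_K j(1) j(2) xW] .
  then obtain n where n: "n \<in> K" "g n x < g j x" using memU[OF j(1)] xy by force
  have "g 1 x \<le> g n x" using memU[OF one_K] x_U1 n by blast
  have "g 1 x = d x (s 1)" using dsym by metis
  also have "\<dots> = d x x + lam {x,y} + d y (s 1)" using cutA[OF xA sB] .
  also have "\<dots> = lam {x,y} + g 1 y" using dself[of x] dsym[of y "s 1"] by simp
  finally have g1x: "g 1 x = lam {x,y} + g 1 y" .
  have "g j x \<le> g j y + d y x" using dtri sV j xy by blast
  also have "d y x \<le> lam {x,y}" using dedge[of y x] xyE by (simp add: insert_commute)
  finally have "g j x \<le> g 1 x" using eq g1x by simp
  then show False using n \<open>g 1 x \<le> g n x\<close> by simp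
qed

lemma Rlem:
  assumes i: "i \<in> K" and j: "j \<in> K" and u: "u \<in> U i" "u \<in> U j" and a: "a \<in> S i" and b: "b \<in> S j"
    and pos: "0 < d a u - d b u"
  shows "eps < d a u - d b u"
proof -
  define D where "D = {r. r > 0 \<and> (\<exists>i\<in>{1..k}. \<exists>j\<in>{1..k}. \<exists>u\<in>U i \<inter> U j. \<exists>si\<in>S i. \<exists>sj\<in>S j.
                   r = dist_T E lam si u - dist_T E lam sj u)}"
  have rD: "d a u - d b u \<in> D" unfolding D_def using i j u a b pos by blast
  have "D \<subseteq> (\<lambda>(a,b,u). d a u - d b u) ` (V \<times> V \<times> V)"
  proof
    fix r assume "r \<in> D"
    then obtain i j u si sj where h: "i \<in> K" "j \<in> K" "u \<in> U i" "si \<in> S i" "sj \<in> S j"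
      "r = d si u - d sj u" unfolding D_def by blast
    then have "si \<in> V" "sj \<in> V" "u \<in> V" using UV SV by blast+
    then show "r \<in> (\<lambda>(a,b,u). d a u - d b u) ` (V \<times> V \<times> V)" using h by force
  qed
  then have fin: "finite D" using Vfin by (meson finite_SigmaI finite_imageI finite_subset)
  have "res E lam k U S = ereal (Min D)" unfolding res_def D_def[symmetric] Let_def using rD by auto
  moreover have "Min D \<le> d a u - d b u" using Min_le[OF fin rD] .
  ultimately have "res E lam k U S \<le> ereal (d a u - d b u)" by simp
  then have "ereal eps < ereal (d a u - d b u)" using eps_res by (meson less_le_trans)
  then show ?thesis by simp
qed

lemma Y': "m \<in> K \<Longrightarrow> m \<noteq> 1 \<Longrightarrow> f 1 y < h m y'"
proof -
  assume m: "m \<in> K" "m \<noteq> 1"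
  have "y' \<in> U' 1" using U'1 by simp
  then have h1: "\<forall>n\<in>K. h 1 y' \<le> h n y'" using memU'[OF one_K] by blast
  have "y' \<notin> U' m" using U'i[OF m(2)] UV[OF m(1)] y'_new by blast
  then obtain n where n: "n \<in> K" "h n y' < h m y'" using memU'[OF m(1)] V'_def by force
  have "h 1 y' = f 1 y" using hy'[OF one_K] s'1A by simp
  then show ?thesis using h1 n by force
qed

lemma Y'A: "m \<in> K \<Longrightarrow> m \<noteq> 1 \<Longrightarrow> s' m \<in> A \<Longrightarrow> f 1 y < f m y"
  using Y' hy' by fastforce

lemma Ylem: "v \<in> B \<Longrightarrow> m \<in> K \<Longrightarrow> m \<noteq> 1 \<Longrightarrow> s' m \<in> A \<Longrightarrow> f 1 v < f m v"
proof -
  assume v: "v \<in> B" and m: "m \<in> K" "m \<noteq> 1" "s' m \<in> A"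
  have "f 1 v = d (s' 1) x + lam {x,y} + d y v" using cutA[OF s'1A v] .
  moreover have "f m v = d (s' m) x + lam {x,y} + d y v" using cutA[OF m(3) v] .
  moreover have "f 1 y = d (s' 1) x + lam {x,y}" using cutA[OF s'1A yB] dself by simp
  moreover have "f m y = d (s' m) x + lam {x,y}" using cutA[OF m(3) yB] dself by simp
  ultimately show ?thesis using Y'A[OF m] by simp
qed

definition Hm :: "'a \<Rightarrow> real" where "Hm w = Min ((\<lambda>m. h m w) ` K)"

lemma Hm_le: "m \<in> K \<Longrightarrow> Hm w \<le> h m w"
  unfolding Hm_def by (rule Min_le) auto

lemma Hm_ex: "\<exists>j\<in>K. h j w = Hm w"
proof -
  have "Hm w \<in> (\<lambda>m. h m w) ` K" unfolding Hm_def by (rule Min_in) (use one_K in auto)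
  then show ?thesis by auto
qed

lemma U'mem: "i \<in> K \<Longrightarrow> w \<in> V' \<Longrightarrow> w \<in> U' i \<longleftrightarrow> h i w = Hm w"
proof -
  assume i: "i \<in> K" and w: "w \<in> V'"
  obtain j where j: "j \<in> K" "h j w = Hm w" using Hm_ex by blast
  show ?thesis
  proof
    assume "w \<in> U' i"
    then have "h i w \<le> h j w" using memU'[OF i] j by blast
    then show "h i w = Hm w" using Hm_le[OF i, of w] j by simp
  next
    assume "h i w = Hm w"
    then show "w \<in> U' i" using memU'[OF i] w Hm_le by simp
  qed
qed

lemma Ymin: "m \<in> K \<Longrightarrow> f 1 y \<le> f m y"
proof -
  assume m: "m \<in> K"
  obtain j where j: "j \<in> K" "h j y = Hm y" using Hm_ex by blast
  have yV': "y \<in> V'" using V'_def xy by simp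
  have yU'1: "y \<notin> U' 1" using U'1 yA y'_ne by auto
  have j1: "j \<noteq> 1" using j yU'1 U'mem[OF one_K yV'] by auto
  have jB: "s' j \<notin> A"
  proof
    assume jA: "s' j \<in> A"
    have "h 1 y = f 1 y + eps" using hf[OF one_K xy(2)] s'1A yA by simp
    moreover have "h j y = f j y + eps" using hf[OF j(1) xy(2)] jA yA by simp
    ultimately have "h 1 y < h j y" using Y'A[OF j(1) j1 jA] by simp
    then show False using Hm_le[OF one_K, of y] j by simp
  qed
  have yUj: "y \<in> U j" using U'mem[OF j(1) yV'] j U'i[OF j1] by blast
  have hj: "h j y = f j y" using hf[OF j(1) xy(2)] jB yA by simp
  have "f 1 y < f j y + eps" using Y'[OF j(1) j1] hy'[OF j(1)] jB by simp
  have f1j: "f 1 y \<le> f j y"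
  proof (rule ccontr)
    assume "\<not> f 1 y \<le> f j y"
    then have "eps < f 1 y - f j y"
      using Rlem[OF one_K j(1) y_U1 yUj, of "s' 1" "s' j"] sol'_i one_K j(1) by auto
    then show False using \<open>f 1 y < f j y + eps\<close> by simp
  qed
  show ?thesis
  proof (cases "s' m \<in> A")
    case True
    show ?thesis
    proof (cases "m = 1")
      case True then show ?thesis by simp
    next
      case False then show ?thesis using Y'A[OF m False \<open>s' m \<in> A\<close>] by simp
    qed
  next
    case False
    have "h m y = f m y" using hf[OF m xy(2)] False yA by simp
    then show ?thesis using Hm_le[OF m, of y] j hj f1j by simp
  qed
qed

lemma Xlem: "v \<in> A \<Longrightarrow> m \<in> K \<Longrightarrow> s' m \<notin> A \<Longrightarrow> f 1 v < f m v"
proof -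
  assume v: "v \<in> A" and m: "m \<in> K" "s' m \<notin> A"
  have smB: "s' m \<in> B" using s'V m by blast
  have vV: "v \<in> V" using v AV by blast
  have "f m v = d v (s' m)" using dsym by metis
  also have "\<dots> = d v x + lam {x,y} + d y (s' m)" using cutA[OF v smB] .
  finally have 1: "f m v = d x v + lam {x,y} + f m y" using dsym by metis
  have 2: "f 1 y = d (s' 1) x + lam {x,y}" using cutA[OF s'1A yB] dself by simp
  have 3: "f 1 v \<le> d (s' 1) x + d x v" using dtri s'V one_K xy vV by blast
  show ?thesis using 1 2 3 Ymin[OF m(1)] lxy by simp
qed

lemma Acase: "v \<in> A \<Longrightarrow> i \<in> K \<Longrightarrow> v \<in> U i \<longleftrightarrow> (\<forall>m\<in>K. f i v \<le> f m v)"
proof -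
  assume v: "v \<in> A" and i: "i \<in> K"
  have vV: "v \<in> V" using v AV by blast
  have vV': "v \<in> V'" using vV V'_def by simp
  have UU': "v \<in> U i \<longleftrightarrow> v \<in> U' i"
  proof (cases "i = 1")
    case True then show ?thesis using U'1 v vV y'_new by auto
  next
    case False then show ?thesis using U'i by simp
  qed
  show ?thesis
  proof
    assume "v \<in> U i"
    then have hi: "\<forall>n\<in>K. h i v \<le> h n v" using UU' memU'[OF i] by blast
    show "\<forall>m\<in>K. f i v \<le> f m v"
    proof
      fix m assume m: "m \<in> K"
      show "f i v \<le> f m v"
      proof (cases "s' i \<in> A")
        case False
        have "h i v = f i v + eps" using hf[OF i vV] False v by simp
        then show ?thesis using hi m h_le_f[OF m vV] by force
      next
        case True
        have hiv: "h i v = f i v" using hf[OF i vV] True v by simp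
        show ?thesis
        proof (cases "s' m \<in> A")
          case True
          then show ?thesis using hf[OF m vV] v hiv hi m by force
        next
          case False
          have "f i v \<le> f 1 v" using hi one_K hiv hf[OF one_K vV] s'1A v by force
          then show ?thesis using Xlem[OF v m False] by simp
        qed
      qed
    qed
  next
    assume H: "\<forall>m\<in>K. f i v \<le> f m v"
    have iA: "s' i \<in> A"
    proof (rule ccontr)
      assume "s' i \<notin> A"
      then have "f 1 v < f i v" using Xlem[OF v i] by blast
      then show False using H one_K by force
    qed
    have "\<forall>m\<in>K. h i v \<le> h m v"
    proof
      fix m assume m: "m \<in> K"
      have "h i v = f i v" using hf[OF i vV] iA v by simp
      then show "h i v \<le> h m v" using H m h_ge_f[OF m vV] by force
    qed
    then show "v \<in> U i" using UU' memU'[OF i] vV' by blast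
  qed
qed

end


context L begin

lemma Bmin:
  assumes v: "v \<in> B" and j: "j \<in> K" "h j v = Hm v"
  shows "j \<noteq> 1 \<and> s' j \<notin> A \<and> v \<in> U j \<and> f j v = Hm v"
proof -
  have vV: "v \<in> V" using v by blast
  have vV': "v \<in> V'" using vV V'_def by simp
  have vU'1: "v \<notin> U' 1" using U'1 v y'_new by auto
  have j1: "j \<noteq> 1" using j vU'1 U'mem[OF one_K vV'] by auto
  have jB: "s' j \<notin> A"
  proof
    assume jA: "s' j \<in> A"
    have "h 1 v = f 1 v + eps" using hf[OF one_K vV] s'1A v by simp
    moreover have "h j v = f j v + eps" using hf[OF j(1) vV] jA v by simp
    ultimately have "h 1 v < h j v" using Ylem[OF v j(1) j1 jA] by simp
    then show False using Hm_le[OF one_K, of v] j by simp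
  qed
  have "v \<in> U j" using U'mem[OF j(1) vV'] j U'i[OF j1] by blast
  moreover have "f j v = Hm v" using hf[OF j(1) vV] jB v j by simp
  ultimately show ?thesis using j1 jB by blast
qed

lemma hB: "v \<in> B \<Longrightarrow> m \<in> K \<Longrightarrow> s' m \<notin> A \<Longrightarrow> h m v = f m v"
  using hf by auto

lemma h1B: "v \<in> B \<Longrightarrow> h 1 v = f 1 v + eps"
  using hf[OF one_K] s'1A by auto

definition Cp :: "'a \<Rightarrow> bool" where
  "Cp v \<longleftrightarrow> (v \<in> U 1 \<longrightarrow> f 1 v = Hm v) \<and> (v \<notin> U 1 \<longrightarrow> Hm v < f 1 v)"

lemma Cbase: "Cp y"
proof -
  obtain j where j: "j \<in> K" "h j y = Hm y" using Hm_ex by blast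
  have b: "j \<noteq> 1" "s' j \<notin> A" "y \<in> U j" "f j y = Hm y" using Bmin[OF yB j] by auto
  have "f 1 y \<le> f j y" using Ymin[OF j(1)] .
  moreover have "f j y \<le> f 1 y + eps" using Hm_le[OF one_K, of y] h1B[OF yB] b by simp
  moreover have "f j y \<le> f 1 y"
  proof (rule ccontr)
    assume "\<not> f j y \<le> f 1 y"
    then have "eps < f j y - f 1 y"
      using Rlem[OF j(1) one_K b(3) y_U1, of "s' j" "s' 1"] sol'_i one_K j(1) by auto
    then show False using \<open>f j y \<le> f 1 y + eps\<close> by simp
  qed
  ultimately show ?thesis unfolding Cp_def using y_U1 b by simp
qed

lemma Wlem:
  assumes m: "m \<in> K" "m \<noteq> 1" and r: "r \<in> V"
    and dd: "d (s m) r + d r (s' m) \<le> d (s m) (s' m)" and gg: "g 1 r \<le> g m r"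
  shows False
proof -
  have smV: "s' m \<in> V" using s'V m(1) .
  have "g 1 (s' m) \<le> g 1 r + d r (s' m)" using dtri sV one_K r smV by blast
  also have "\<dots> \<le> g m (s' m)" using gg dd by simp
  finally have 1: "g 1 (s' m) \<le> g m (s' m)" .
  have "s' m \<in> U m" using s'W[OF m(1)] WU[OF m(1)] by blast
  then have "\<forall>n\<in>K. g m (s' m) \<le> g n (s' m)" using memU[OF m(1)] by blast
  then have "s' m \<in> U 1" using 1 memU[OF one_K] smV by force
  then show False using W_notin[OF m(1) one_K m(2)[symmetric] s'W[OF m(1)]] by blast
qed

lemma Cstep:
  assumes p: "p \<in> B" and q: "q \<in> B" and e: "{p,q} \<in> E" and yC: "y \<in> comp_without E q p"
    and Cpp: "Cp p"
  shows "Cp q"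
proof -
  define C where "C = comp_without E q p"
  define l where "l = lam {p,q}"
  have lpos: "0 < l" using lampos e l_def by blast
  have pV: "p \<in> V" and qV: "q \<in> V" using p q by blast+
  have qC: "q \<notin> C" and pC: "p \<in> C" using comp_props[OF tree e] C_def by blast+
  have side1: "a \<in> C \<Longrightarrow> d a q = d a p + l" for a
    using tree_cut[OF tree nn e, of a q] qV qC C_def l_def dself by simp
  have side2: "a \<in> V \<Longrightarrow> a \<notin> C \<Longrightarrow> d a p = d a q + l" for a
  proof -
    assume a: "a \<in> V" "a \<notin> C"
    have "d p a = d p p + lam {p,q} + d q a"
      using tree_cut[OF tree nn e pC[unfolded C_def], of a] a C_def by blast
    then show ?thesis using dself[of p] dsym[of p a] dsym[of q a] l_def by simp
  qed
  have cross: "a \<in> C \<Longrightarrow> b \<in> V \<Longrightarrow> b \<notin> C \<Longrightarrow> d a b = d a p + l + d q b" for a b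
    using tree_cut[OF tree nn e] C_def l_def by blast
  have dyq: "d y q = d y p + l" using side1 yC C_def by blast
  have f1: "f 1 q = f 1 p + l"
    using cutA[OF s'1A p] cutA[OF s'1A q] dyq by simp
  have g1: "g 1 q = g 1 p + l"
    using cutA[OF s1A p] cutA[OF s1A q] dyq by simp
  have dpq: "d p q \<le> l" using dedge[OF e] l_def by simp
  have lipf: "n \<in> K \<Longrightarrow> f n q \<le> f n p + l" for n
    using dtri[OF s'V pV qV] dpq by force
  have lipg: "n \<in> K \<Longrightarrow> g n p \<le> g n q + l" for n
  proof -
    assume n: "n \<in> K"
    have "g n p \<le> g n q + d q p" using dtri[OF sV[OF n] qV pV] .
    then show ?thesis using dpq dsym[of q p] by simp
  qed
  obtain m where m: "m \<in> K" "h m p = Hm p" using Hm_ex by blast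
  have mb: "m \<noteq> 1" "s' m \<notin> A" "p \<in> U m" "f m p = Hm p" using Bmin[OF p m] by auto
  have hmq: "h m q = f m q" using hB[OF q m(1) mb(2)] .
  have qV': "q \<in> V'" using qV V'_def by simp
  show ?thesis
  proof (cases "p \<in> U 1")
    case pU: True
    have fp: "f 1 p = f m p" using Cpp pU mb unfolding Cp_def by simp
    have gp: "g m p = g 1 p"
    proof -
      have "g 1 p \<le> g m p" using memU[OF one_K] pU m(1) by blast
      moreover have "g m p \<le> g 1 p" using memU[OF m(1)] mb(3) one_K by blast
      ultimately show ?thesis by simp
    qed
    have smV: "s m \<in> V" and s'mV: "s' m \<in> V" using sV s'V m(1) by blast+
    show ?thesis
    proof (cases "s' m \<in> C")
      case s'mC: False
      have fmq: "f m q = f 1 q - 2 * l" using side2[OF s'mV s'mC] fp f1 by simp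
      show ?thesis
      proof (cases "s m \<in> C")
        case smC: False
        have "g m q = g 1 q - 2 * l" using side2[OF smV smC] gp g1 by simp
        then have "q \<notin> U 1" using memU[OF one_K] m(1) lpos by force
        moreover have "Hm q < f 1 q" using Hm_le[OF m(1), of q] hmq fmq lpos by simp
        ultimately show ?thesis unfolding Cp_def by blast
      next
        case smC: True
        have "d (s m) (s' m) = d (s m) p + l + d q (s' m)" using cross[OF smC s'mV s'mC] .
        then have dd: "d (s m) q + d q (s' m) \<le> d (s m) (s' m)" using side1[OF smC] by simp
        have "g m q = g 1 q" using side1[OF smC] gp g1 by simp
        then show ?thesis using Wlem[OF m(1) mb(1) qV dd] by simp
      qed
    next
      case s'mC: True
      have fmq: "f m q = f 1 q" using side1[OF s'mC] fp f1 by simp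
      show ?thesis
      proof (cases "s m \<in> C")
        case smC: False
        have "d (s' m) (s m) = d (s' m) p + l + d q (s m)" using cross[OF s'mC smV smC] .
        then have dd: "d (s m) p + d p (s' m) \<le> d (s m) (s' m)"
          using side2[OF smV smC] dsym[of "s' m" "s m"] dsym[of "s' m" p] dsym[of q "s m"] by simp
        then show ?thesis using Wlem[OF m(1) mb(1) pV dd] gp by simp
      next
        case smC: True
        have gq: "g m q = g 1 q" using side1[OF smC] gp g1 by simp
        show ?thesis
        proof (cases "q \<in> U 1")
          case True
          then have "\<forall>n\<in>K. g m q \<le> g n q" using memU[OF one_K] gq by simp
          then have "q \<in> U m" using memU[OF m(1)] qV by blast
          then have "q \<in> U' m" using U'i[OF mb(1)] by simp
          then have "h m q = Hm q" using U'mem[OF m(1) qV'] by blast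
          then show ?thesis unfolding Cp_def using True hmq fmq by simp
        next
          case False
          have "Hm q < f 1 q"
          proof (rule ccontr)
            assume "\<not> Hm q < f 1 q"
            then have "h m q = Hm q" using Hm_le[OF m(1), of q] hmq fmq by simp
            then have "q \<in> U m" using U'mem[OF m(1) qV'] U'i[OF mb(1)] by simp
            then have "\<forall>n\<in>K. g m q \<le> g n q" using memU[OF m(1)] by blast
            then have "q \<in> U 1" using memU[OF one_K] gq qV by simp
            then show False using False by blast
          qed
          then show ?thesis unfolding Cp_def using False by blast
        qed
      qed
    qed
  next
    case pU: False
    have hp: "Hm p < f 1 p" using Cpp pU unfolding Cp_def by blast
    have "Hm q \<le> f m q" using Hm_le[OF m(1), of q] hmq by simp
    also have "\<dots> \<le> f m p + l" using lipf[OF m(1)] .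
    also have "\<dots> < f 1 q" using mb(4) hp f1 by simp
    finally have lt: "Hm q < f 1 q" .
    have "q \<notin> U 1"
    proof
      assume qU: "q \<in> U 1"
      have "\<forall>n\<in>K. g 1 p \<le> g n p"
      proof
        fix n assume n: "n \<in> K"
        have "g 1 q \<le> g n q" using memU[OF one_K] qU n by blast
        moreover have "g n q \<le> g n p + l"
        proof -
          have "g n q \<le> g n p + d p q" using dtri[OF sV[OF n] pV qV] .
          then show ?thesis using dpq by simp
        qed
        ultimately show "g 1 p \<le> g n p" using g1 by simp
      qed
      then have "p \<in> U 1" using memU[OF one_K] pV by blast
      then show False using pU by blast
    qed
    then show ?thesis unfolding Cp_def using lt by blast
  qed
qed

lemma Cwalk: "walk E ws \<Longrightarrow> distinct ws \<Longrightarrow> hd ws = y \<Longrightarrow> set ws \<subseteq> B \<Longrightarrow> Cp (last ws)"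
proof (induct ws rule: rev_induct)
  case Nil then show ?case by (simp add: walk_def)
next
  case (snoc q ws0)
  show ?case
  proof (cases "ws0 = []")
    case True then show ?thesis using snoc Cbase by simp
  next
    case False
    have w0: "walk E ws0" and e: "{last ws0, q} \<in> E"
      using walk_append[OF False, of "[q]" E] snoc.prems by auto
    have "Cp (last ws0)" using snoc.hyps w0 snoc.prems False by simp
    moreover have "y \<in> comp_without E q (last ws0)"
    proof -
      have "walk E (rev ws0)" using w0 walk_rev by blast
      moreover have "hd (rev ws0) = last ws0" "last (rev ws0) = y" "q \<notin> set (rev ws0)"
        using False snoc.prems by (auto simp: hd_rev last_rev)
      ultimately show ?thesis unfolding comp_without_def by blast
    qed
    moreover have "last ws0 \<in> B" "q \<in> B"
    proof -
      have "set (ws0 @ [q]) \<subseteq> B" using snoc.prems(4) .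
      then have "set ws0 \<subseteq> B" "q \<in> B" by auto
      then show "last ws0 \<in> B" "q \<in> B" using last_in_set[OF False] by (blast, blast)
    qed
    ultimately show ?thesis using Cstep[OF _ _ e] by simp
  qed
qed

lemma Call: "v \<in> B \<Longrightarrow> Cp v"
  using wB[OF yB] Cwalk by metis

lemma Bcase: "v \<in> B \<Longrightarrow> i \<in> K \<Longrightarrow> v \<in> U i \<longleftrightarrow> (\<forall>m\<in>K. f i v \<le> f m v)"
proof -
  assume v: "v \<in> B" and i: "i \<in> K"
  have vV: "v \<in> V" using v by blast
  have vV': "v \<in> V'" using vV V'_def by simp
  have C: "Cp v" using Call v .
  obtain j where j: "j \<in> K" "h j v = Hm v" using Hm_ex by blast
  have jb: "j \<noteq> 1" "s' j \<notin> A" "v \<in> U j" "f j v = Hm v" using Bmin[OF v j] by auto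
  have f1ge: "Hm v \<le> f 1 v" using C unfolding Cp_def by force
  have fB: "m \<in> K \<Longrightarrow> s' m \<notin> A \<Longrightarrow> Hm v \<le> f m v" for m using Hm_le hB[OF v] by metis
  have fA: "m \<in> K \<Longrightarrow> s' m \<in> A \<Longrightarrow> f 1 v \<le> f m v" for m
    using Ylem[OF v] by (cases "m = 1") force+
  have fall: "m \<in> K \<Longrightarrow> Hm v \<le> f m v" for m using fB fA f1ge by force
  show ?thesis
  proof (cases "i = 1")
    case True
    show ?thesis
    proof
      assume "v \<in> U i"
      then have "f 1 v = Hm v" using C True unfolding Cp_def by simp
      then show "\<forall>m\<in>K. f i v \<le> f m v" using fall True by simp
    next
      assume H: "\<forall>m\<in>K. f i v \<le> f m v"
      then have "f 1 v \<le> Hm v" using j(1) jb True by force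
      then show "v \<in> U i" using C True unfolding Cp_def by force
    qed
  next
    case False
    show ?thesis
    proof
      assume "v \<in> U i"
      then have "h i v = Hm v" using U'mem[OF i vV'] U'i[OF False] by simp
      then have ib: "s' i \<notin> A" "f i v = Hm v" using Bmin[OF v i] by auto
      then show "\<forall>m\<in>K. f i v \<le> f m v" using fall by simp
    next
      assume H: "\<forall>m\<in>K. f i v \<le> f m v"
      have iB: "s' i \<notin> A"
      proof
        assume "s' i \<in> A"
        then have "f 1 v < f i v" using Ylem[OF v i False] by blast
        then show False using H one_K by force
      qed
      have "h i v = f i v" using hB[OF v i iB] .
      also have "\<dots> \<le> Hm v" using H j(1) jb by force
      finally have "h i v = Hm v" using Hm_le[OF i, of v] by simp
      then show "v \<in> U i" using U'mem[OF i vV'] U'i[OF False] by simp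
    qed
  qed
qed

lemma final: "is_solution V E lam k U S s'"
  unfolding is_solution_def
proof
  fix i assume i: "i \<in> K"
  have "U i = cell V E lam (s' i) (s' ` K)"
  proof
    show "U i \<subseteq> cell V E lam (s' i) (s' ` K)"
    proof
      fix v assume v: "v \<in> U i"
      have vV: "v \<in> V" using v UV[OF i] by blast
      have "\<forall>m\<in>K. f i v \<le> f m v"
        using Acase[of v i] Bcase[of v i] v vV i by blast
      then show "v \<in> cell V E lam (s' i) (s' ` K)" unfolding cell_def using vV by blast
    qed
  next
    show "cell V E lam (s' i) (s' ` K) \<subseteq> U i"
    proof
      fix v assume v: "v \<in> cell V E lam (s' i) (s' ` K)"
      then have vV: "v \<in> V" and H: "\<forall>m\<in>K. f i v \<le> f m v" unfolding cell_def by auto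
      show "v \<in> U i" using Acase[of v i] Bcase[of v i] H vV i by blast
    qed
  qed
  then show "s' i \<in> S i \<and> U i = cell V E lam (s' i) (s' ` K)" using sol'_i i by blast
qed

end

theorem lemma17:
  fixes V :: "'a set" and E :: "'a set set" and lam :: "'a set \<Rightarrow> real"
    and k :: nat and U S :: "nat \<Rightarrow> 'a set" and x y y' :: 'a and eps :: real
    and s' :: "nat \<Rightarrow> 'a"
  assumes inst: "gv_instance V E lam k U S"
    and k1: "1 \<le> k"
    and SW: "\<forall>i\<in>{1..k}. S i \<subseteq> W_set k U i"
    and xyE: "{x, y} \<in> E_set E k U 1"
    and xW: "x \<in> W_set k U 1"
    and yU: "y \<in> U 1 - W_set k U 1"
    and eps_pos: "0 < eps"
    and eps_res: "ereal eps < res E lam k U S"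
    and y'_new: "y' \<notin> V"
    and yes: "\<exists>s. is_solution V E lam k U S s"
    and sol': "is_solution (exp_V V y') (exp_E E x y y') (exp_lam lam x y y' eps) k
                 (exp_U V E U x y y') S s'"
  shows "is_solution V E lam k U S s'"
proof -
  obtain s where sol: "is_solution V E lam k U S s" using yes by blast
  interpret L V E lam k U S x y y' eps s' s
    by (unfold_locales; fact assms sol)
  show ?thesis by (rule final)
qed

end
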